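(* For every positive integer $r$, $\delta(3r+1) \ge r$.
   Context: A double-$n$ string is a string of length $2n$ over an alphabet of $n$ symbols in which each symbol appears exactly twice. Positions in the string are numbered $1,\dots,2n$. The distance between two distinct symbols is the minimum, over an occurrence of the first symbol and an occurrence of the second, of the absolute difference of their positions (so adjacent entries have distance $1$). The diameter of a double-$n$ string ($n\ge 2$) is the maximum of the distance over all pairs of distinct symbols. $\delta(n)$ denotes the minimum diameter over all double-$n$ strings. *)

theory Defs
  imports Main
begin

definition double_string :: "nat \<Rightarrow> nat list \<Rightarrow> bool" where
  "double_string n s \<longleftrightarrow> length s = 2 * n \<and> set s \<subseteq> {0..<n}
     \<and> (\<forall>a\<in>{0..<n}. count_list s a = 2)"

definition sym_dist :: "nat list \<Rightarrow> nat \<Rightarrow> nat \<Rightarrow> nat" where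
  "sym_dist s a b = Min {nat \<bar>int i - int j\<bar> | i j.
      i < length s \<and> j < length s \<and> s ! i = a \<and> s ! j = b}"

definition diameter :: "nat \<Rightarrow> nat list \<Rightarrow> nat" where
  "diameter n s = Max {sym_dist s a b | a b. a < n \<and> b < n \<and> a \<noteq> b}"

definition delta :: "nat \<Rightarrow> nat" where
  "delta n = Min {diameter n s | s. double_string n s}"

end

theory Submission
  imports Defs
begin

lemma count_upt: "a < n \<Longrightarrow> count_list [0..<n] a = 1"
  by (induction n) (auto simp: less_Suc_eq)

lemma count_upt0: "\<not> a < n \<Longrightarrow> count_list [0..<n] a = 0"
  by (simp add: count_list_0_iff)

lemma exists_ds: "double_string n ([0..<n] @ [0..<n])"
  unfolding double_string_def by (auto simp: count_upt)

lemma occ_card: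
  assumes "double_string n s" "a < n"
  shows "card {i. i < length s \<and> s ! i = a} = 2"
proof -
  have "count_list s a = 2" using assms unfolding double_string_def by auto
  then have "length (filter ((=) a) s) = 2" by (simp add: count_list_eq_length_filter)
  then show ?thesis unfolding length_filter_conv_card by (simp add: eq_commute[of a])
qed

lemma good_pair:
  assumes ds: "double_string n s" and n: "n = 3 * r + 1" and r: "r \<ge> 1"
  shows "\<exists>a b. a < n \<and> b < n \<and> a \<noteq> b \<and> r \<le> sym_dist s a b"
proof -
  have len: "length s = 2 * n" using ds unfolding double_string_def by auto
  have sub: "set s \<subseteq> {0..<n}" using ds unfolding double_string_def by auto
  define a where "a = s ! 0"
  have "s ! 0 \<in> set s" using len n by (auto intro: nth_mem)
  hence an: "a < n" using sub a_def by auto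
  define I where "I = {i. i < length s \<and> s ! i = a}"
  have cI: "card I = 2" using occ_card[OF ds an] I_def by simp
  have "0 \<in> I" using I_def a_def len n by auto
  from cI obtain x y where xy: "I = {x, y}" "x \<noteq> y" by (auto simp: card_2_iff)
  obtain p where Ip: "I = {0, p}" "p \<noteq> 0"
  proof -
    have "x = 0 \<or> y = 0" using xy \<open>0 \<in> I\<close> by auto
    thus thesis
    proof
      assume "x = 0" thus thesis using that[of y] xy by auto
    next
      assume "y = 0" thus thesis using that[of x] xy by auto
    qed
  qed
  define J where "J = {1..<r} \<union> {p-(r-1)..<p} \<union> {p+1..<p+r}"
  define good where "good b \<longleftrightarrow> (\<forall>i j. i < length s \<and> j < length s \<and> s ! i = a \<and> s ! j = b
      \<longrightarrow> r \<le> nat \<bar>int i - int j\<bar>)" for b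
  have badsub: "{b. b < n \<and> b \<noteq> a \<and> \<not> good b} \<subseteq> (nth s) ` J"
  proof
    fix b assume "b \<in> {b. b < n \<and> b \<noteq> a \<and> \<not> good b}"
    then obtain i j where ij: "i < length s" "j < length s" "s ! i = a" "s ! j = b"
      "nat \<bar>int i - int j\<bar> < r" "b \<noteq> a"
      unfolding good_def by auto
    have "i \<in> I" using ij I_def by auto
    hence "i = 0 \<or> i = p" using Ip by auto
    moreover have "j \<noteq> i" using ij by auto
    ultimately have "j \<in> J" using ij(5) unfolding J_def by auto
    thus "b \<in> (nth s) ` J" using ij by auto
  qed
  have "card J \<le> card ({1..<r} \<union> {p-(r-1)..<p}) + card {p+1..<p+r}"
    unfolding J_def by (rule card_Un_le)
  also have "\<dots> \<le> card {1..<r} + card {p-(r-1)..<p} + card {p+1..<p+r}"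
    using card_Un_le[of "{1..<r}" "{p-(r-1)..<p}"] by linarith
  also have "\<dots> \<le> 3 * r - 3" by simp
  finally have cJ: "card ((nth s) ` J) \<le> 3 * r - 3"
    using card_image_le[of J "nth s"] J_def by (meson finite_Un finite_atLeastLessThan le_trans)
  have "{b. b < n \<and> b \<noteq> a} = {0..<n} - {a}" by auto
  hence cA: "card {b. b < n \<and> b \<noteq> a} = 3 * r" using an n by simp
  have "\<exists>b. b < n \<and> b \<noteq> a \<and> good b"
  proof (rule ccontr)
    assume "\<not> ?thesis"
    hence "{b. b < n \<and> b \<noteq> a} \<subseteq> (nth s) ` J" using badsub by auto
    hence "card {b. b < n \<and> b \<noteq> a} \<le> card ((nth s) ` J)"
      by (intro card_mono) (auto simp: J_def)
    thus False using cA cJ r by linarith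
  qed
  then obtain b where b: "b < n" "b \<noteq> a" "good b" by auto
  have "card {i. i < length s \<and> s ! i = b} = 2" using occ_card[OF ds b(1)] .
  hence "{i. i < length s \<and> s ! i = b} \<noteq> {}" by (intro notI) simp
  then obtain jb where jb: "jb < length s" "s ! jb = b" by blast
  define D where "D = {nat \<bar>int i - int j\<bar> | i j.
      i < length s \<and> j < length s \<and> s ! i = a \<and> s ! j = b}"
  have "D \<subseteq> (\<lambda>(i,j). nat \<bar>int i - int j\<bar>) ` ({..<length s} \<times> {..<length s})"
    unfolding D_def by auto
  hence fD: "finite D" by (rule finite_subset) auto
  have "0 < length s" using len n by simp
  have "nat \<bar>int 0 - int jb\<bar> \<in> D" unfolding D_def using jb \<open>0 < length s\<close> a_def by blast
  hence neD: "D \<noteq> {}" by auto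
  have "\<forall>d\<in>D. r \<le> d" using b(3) unfolding D_def good_def by auto
  hence "r \<le> Min D" using fD neD by simp
  hence "r \<le> sym_dist s a b" unfolding sym_dist_def D_def .
  thus ?thesis using an b by blast
qed

lemma diam_ge:
  assumes ds: "double_string n s" and n: "n = 3 * r + 1" and r: "r \<ge> 1"
  shows "r \<le> diameter n s"
proof -
  obtain a b where ab: "a < n" "b < n" "a \<noteq> b" "r \<le> sym_dist s a b"
    using good_pair[OF assms] by blast
  define M where "M = {sym_dist s a b | a b. a < n \<and> b < n \<and> a \<noteq> b}"
  have "M \<subseteq> (\<lambda>(a,b). sym_dist s a b) ` ({..<n} \<times> {..<n})" unfolding M_def by auto
  hence fM: "finite M" by (rule finite_subset) auto
  have "sym_dist s a b \<in> M" unfolding M_def using ab by auto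
  hence "sym_dist s a b \<le> Max M" using fM by simp
  thus ?thesis using ab unfolding diameter_def M_def by simp
qed

theorem lemma3p2:
  fixes r :: nat
  assumes "r \<ge> 1"
  shows "delta (3 * r + 1) \<ge> r"
proof -
  define n where "n = 3 * r + 1"
  define S where "S = {diameter n s | s. double_string n s}"
  have "{s. double_string n s} \<subseteq> {xs. set xs \<subseteq> {0..<n} \<and> length xs = 2 * n}"
    unfolding double_string_def by auto
  hence "finite {s. double_string n s}"
    by (rule finite_subset) (rule finite_lists_length_eq, simp)
  hence fS: "finite S" unfolding S_def
    by (rule finite_image_set)
  have "S \<noteq> {}" unfolding S_def using exists_ds by auto
  moreover have "\<forall>x\<in>S. r \<le> x" unfolding S_def using diam_ge[OF _ n_def assms] by auto
  ultimately have "r \<le> Min S" using fS by simp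
  thus ?thesis unfolding delta_def S_def n_def .
qed

end
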